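(* Let $q\ge1$. For every closed planar $C^2$ curve $\bm\gamma$ it holds that $$\int_{\bm\gamma}|\kappa_{\bm\gamma}|^q\,d\mathcal H^1\ge(\mathrm{diam}\,\bm\gamma)^{1-q},$$ where $\kappa_{\bm\gamma}$ denotes the curvature of $\bm\gamma$. *)

theory Defs
  imports "HOL-Analysis.Analysis"
begin

text \<open>Periodicity of gamma (together with differentiability everywhere) makes the
  curve closed in the C^2 sense (derivatives match at the endpoints of a period).\<close>

definition closed_C2_curve :: "(real \<Rightarrow> real^2) \<Rightarrow> real \<Rightarrow> bool" where
  "closed_C2_curve \<gamma> L \<longleftrightarrow>
     L > 0 \<and> (\<forall>t. \<gamma> (t + L) = \<gamma> t) \<and>
     (\<exists>\<gamma>1 \<gamma>2. (\<forall>t. (\<gamma> has_vector_derivative \<gamma>1 t) (at t)) \<and>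
              (\<forall>t. (\<gamma>1 has_vector_derivative \<gamma>2 t) (at t)) \<and>
              continuous_on UNIV \<gamma>2) \<and>
     (\<forall>t. vector_derivative \<gamma> (at t) \<noteq> 0)"

definition curvature :: "(real \<Rightarrow> real^2) \<Rightarrow> real \<Rightarrow> real" where
  "curvature \<gamma> t =
     (let d1 = vector_derivative \<gamma> (at t);
          d2 = vector_derivative (\<lambda>s. vector_derivative \<gamma> (at s)) (at t)
      in (d1$1 * d2$2 - d1$2 * d2$1) / norm d1 ^ 3)"

definition curve_integral_ds :: "(real \<Rightarrow> real^2) \<Rightarrow> real \<Rightarrow> (real \<Rightarrow> real) \<Rightarrow> real" where
  "curve_integral_ds \<gamma> L f = integral {0..L} (\<lambda>t. f t * norm (vector_derivative \<gamma> (at t)))"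

end

theory Submission
  imports Defs
begin


lemma young_powr:
  fixes x c q :: real
  assumes "x \<ge> 0" "c > 0" "q \<ge> 1"
  shows "x powr q \<ge> q * c powr (q-1) * x - (q-1) * c powr q"
proof (cases "x = 0")
  case True
  then show ?thesis using assms by simp
next
  case False
  hence xp: "x > 0" using assms by simp
  have d: "((\<lambda>x. x powr q) has_field_derivative q * c powr (q-1)) (at c within {0<..})"
    using assms by (auto intro!: derivative_eq_intros)
  have "x powr q - c powr q \<ge> q * c powr (q-1) * (x - c)"
    by (rule convex_on_imp_above_tangent[OF powr_convex[OF assms(3)] _ _ _ d])
       (use assms xp in \<open>auto simp: interior_open\<close>)
  moreover have "c powr (q-1) * c = c powr q"
    using assms by (simp add: powr_diff)
  hence "c * (q * c powr (q-1)) = q * c powr q" by (simp add: algebra_simps)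
  ultimately show ?thesis by (simp add: algebra_simps)
qed

lemma ftc_norm_bound:
  fixes T T' :: "real \<Rightarrow> 'a::euclidean_space"
  assumes "a \<le> u" "u \<le> v" "v \<le> b"
    and dT: "\<And>t. (T has_vector_derivative T' t) (at t)"
    and cT': "continuous_on UNIV T'"
  shows "norm (T v - T u) \<le> integral {a..b} (\<lambda>t. norm (T' t))"
proof -
  have "(T' has_integral (T v - T u)) {u..v}"
    by (rule fundamental_theorem_of_calculus) (use assms in \<open>auto intro: has_vector_derivative_at_within\<close>)
  hence "T v - T u = integral {u..v} T'" by (simp add: integral_unique)
  also have "norm \<dots> \<le> integral {u..v} (\<lambda>t. norm (T' t))"
    by (rule integral_norm_bound_integral)
       (auto intro!: integrable_continuous_interval continuous_on_norm continuous_on_subset[OF cT'])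
  also have "\<dots> \<le> integral {a..b} (\<lambda>t. norm (T' t))"
    by (rule integral_subset_le)
       (use assms in \<open>auto intro!: integrable_continuous_interval continuous_on_norm continuous_on_subset[OF cT']\<close>)
  finally show ?thesis .
qed

lemma half_arc:
  fixes \<gamma> g1 T T' :: "real \<Rightarrow> 'a::euclidean_space"
  assumes ab: "a \<le> b"
    and dg: "\<And>t. (\<gamma> has_vector_derivative g1 t) (at t)"
    and dT: "\<And>t. (T has_vector_derivative T' t) (at t)"
    and cg: "continuous_on UNIV g1" and cT': "continuous_on UNIV T'"
    and nT: "\<And>t. norm (T t) = 1"
    and gT: "\<And>t. g1 t = norm (g1 t) *\<^sub>R T t"
    and e: "e = T a \<or> e = T b"
  shows "(\<gamma> b - \<gamma> a) \<bullet> e \<ge> (1 - (integral {a..b} (\<lambda>t. norm (T' t)))^2/2) * integral {a..b} (\<lambda>t. norm (g1 t))"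
proof -
  define K where "K = integral {a..b} (\<lambda>t. norm (T' t))"
  have K0: "K \<ge> 0" unfolding K_def
    by (rule integral_nonneg) (auto intro!: integrable_continuous_interval continuous_on_norm continuous_on_subset[OF cT'])
  have close: "norm (T u - e) \<le> K" if u: "u \<in> {a..b}" for u
    using e
  proof
    assume "e = T a"
    thus ?thesis using ftc_norm_bound[of a a u b T T'] u dT cT' unfolding K_def by auto
  next
    assume "e = T b"
    thus ?thesis using ftc_norm_bound[of a u b b T T'] u dT cT' unfolding K_def
      by (auto simp: norm_minus_commute)
  qed
  have inner_lb: "T u \<bullet> e \<ge> 1 - K^2/2" if u: "u \<in> {a..b}" for u
  proof -
    have ne: "norm e = 1" using e nT by auto
    have "(norm (T u - e))^2 = 2 - 2 * (T u \<bullet> e)"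
    proof -
      have "(norm (T u - e))^2 = (T u - e) \<bullet> (T u - e)" by (simp add: power2_norm_eq_inner)
      also have "\<dots> = T u \<bullet> T u + e \<bullet> e - 2 * (T u \<bullet> e)"
        by (simp add: inner_diff_left inner_diff_right inner_commute)
      also have "T u \<bullet> T u = 1" using nT[of u] by (metis power2_norm_eq_inner power_one)
      also have "e \<bullet> e = 1" using ne by (metis power2_norm_eq_inner power_one)
      finally show ?thesis by simp
    qed
    moreover have "(norm (T u - e))^2 \<le> K^2"
      using close[OF u] by (simp add: power_mono)
    ultimately show ?thesis by simp
  qed
  have pt: "norm (g1 u) * (1 - K^2/2) \<le> g1 u \<bullet> e" if u: "u \<in> {a..b}" for u
  proof -
    have "g1 u \<bullet> e = norm (g1 u) * (T u \<bullet> e)"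
      by (subst gT) simp
    thus ?thesis using inner_lb[OF u] by (simp add: mult_left_mono)
  qed
  have "(g1 has_integral (\<gamma> b - \<gamma> a)) {a..b}"
    by (rule fundamental_theorem_of_calculus) (use assms in \<open>auto intro: has_vector_derivative_at_within\<close>)
  hence "((\<lambda>t. g1 t \<bullet> e) has_integral ((\<gamma> b - \<gamma> a) \<bullet> e)) {a..b}"
    using has_integral_linear[OF _ bounded_linear_inner_left, of g1 _ _ e] by (simp add: o_def)
  hence eq: "integral {a..b} (\<lambda>t. g1 t \<bullet> e) = (\<gamma> b - \<gamma> a) \<bullet> e" and
    int1: "(\<lambda>t. g1 t \<bullet> e) integrable_on {a..b}" by auto
  have "(1 - K^2/2) * integral {a..b} (\<lambda>t. norm (g1 t)) = integral {a..b} (\<lambda>t. norm (g1 t) * (1 - K^2/2))"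
    by simp
  also have "\<dots> \<le> integral {a..b} (\<lambda>t. g1 t \<bullet> e)"
    by (rule integral_le[OF _ int1 pt])
       (auto intro!: integrable_continuous_interval continuous_intros continuous_on_subset[OF cg])
  finally show ?thesis using eq unfolding K_def by simp
qed

lemma lagrange2:
  fixes x y :: "real^2"
  shows "(x$1*y$2 - x$2*y$1)^2 = (norm x)^2*(norm y)^2 - (x \<bullet> y)^2"
  unfolding power2_norm_eq_inner by (simp add: inner_vec_def sum_2 power2_eq_square algebra_simps)

lemma deriv_norm_vec:
  fixes g1 :: "real \<Rightarrow> 'a::real_inner"
  assumes d: "(g1 has_vector_derivative g2) (at t)" and nz: "g1 t \<noteq> 0"
  shows "((\<lambda>t. norm (g1 t)) has_real_derivative (g1 t \<bullet> g2) / norm (g1 t)) (at t)"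
proof -
  have "((\<lambda>t. norm (g1 t)) has_derivative (\<lambda>h. sgn (g1 t) \<bullet> (h *\<^sub>R g2))) (at t)"
    using has_derivative_compose[OF d[unfolded has_vector_derivative_def] has_derivative_norm[OF nz]]
    by (simp add: inner_commute)
  moreover have "(\<lambda>h. sgn (g1 t) \<bullet> (h *\<^sub>R g2)) = (\<lambda>h. ((g1 t \<bullet> g2) / norm (g1 t)) * h)"
    by (auto simp: sgn_div_norm divide_inverse ac_simps)
  ultimately show ?thesis unfolding has_field_derivative_def by metis
qed

lemma deriv_T:
  fixes g1 :: "real \<Rightarrow> 'a::real_inner"
  assumes d: "(g1 has_vector_derivative g2) (at t)" and nz: "g1 t \<noteq> 0"
  shows "((\<lambda>t. (1 / norm (g1 t)) *\<^sub>R g1 t) has_vector_derivative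
     ((1 / norm (g1 t)) *\<^sub>R g2 - ((g1 t \<bullet> g2) / norm (g1 t) ^ 3) *\<^sub>R g1 t)) (at t)"
proof -
  have n: "norm (g1 t) \<noteq> 0" using nz by simp
  have "((\<lambda>t. 1 / norm (g1 t)) has_real_derivative - ((g1 t \<bullet> g2) / norm (g1 t)) / (norm (g1 t))^2) (at t)"
    using DERIV_inverse_fun[OF deriv_norm_vec[OF d nz] n] by (simp add: divide_inverse power2_eq_square)
  from has_vector_derivative_scaleR[OF this d]
  show ?thesis
    using n by (simp add: algebra_simps power3_eq_cube power2_eq_square divide_inverse)
qed

lemma norm_T':
  fixes x y :: "real^2"
  assumes nz: "x \<noteq> 0"
  shows "norm ((1 / norm x) *\<^sub>R y - ((x \<bullet> y) / norm x ^ 3) *\<^sub>R x) = \<bar>x$1*y$2 - x$2*y$1\<bar> / (norm x)^2"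
proof (rule power2_eq_imp_eq)
  define n where "n = norm x"
  have n: "n > 0" using nz unfolding n_def by simp
  have xx: "x \<bullet> x = n^2" unfolding n_def by (simp add: power2_norm_eq_inner)
  have "(norm ((1 / n) *\<^sub>R y - ((x \<bullet> y) / n ^ 3) *\<^sub>R x))^2
      = ((1 / n) *\<^sub>R y - ((x \<bullet> y) / n ^ 3) *\<^sub>R x) \<bullet> ((1 / n) *\<^sub>R y - ((x \<bullet> y) / n ^ 3) *\<^sub>R x)"
    by (simp add: power2_norm_eq_inner)
  also have "\<dots> = (y \<bullet> y) / n^2 - 2 * (x \<bullet> y)^2 / n^4 + (x \<bullet> y)^2 * (x \<bullet> x) / n^6"
    using n by (simp add: inner_diff_left inner_diff_right inner_commute power2_eq_square
        field_simps power_def eval_nat_numeral)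
  also have "\<dots> = (n^2 * (y \<bullet> y) - (x \<bullet> y)^2) / n^4"
    using n unfolding xx by (simp add: field_simps power_def eval_nat_numeral)
  also have "\<dots> = (\<bar>x$1*y$2 - x$2*y$1\<bar> / n^2)^2"
    using lagrange2[of x y] unfolding n_def[symmetric]
    by (simp add: power2_norm_eq_inner power_divide power_mult_distrib flip: power_mult)
  finally show "(norm ((1 / norm x) *\<^sub>R y - ((x \<bullet> y) / norm x ^ 3) *\<^sub>R x))^2 = (\<bar>x$1*y$2 - x$2*y$1\<bar> / (norm x)^2)^2"
    unfolding n_def .
qed auto

lemma periodic_range:
  fixes \<gamma> :: "real \<Rightarrow> 'a"
  assumes L: "L > 0" and per: "\<And>t. \<gamma> (t + L) = \<gamma> t"
  shows "range \<gamma> = \<gamma> ` {0..L}"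
proof -
  have pn: "\<gamma> (x + real n * L) = \<gamma> x" for x n
  proof (induction n)
    case (Suc n)
    have "\<gamma> (x + real (Suc n) * L) = \<gamma> ((x + real n * L) + L)" by (simp add: algebra_simps)
    also have "\<dots> = \<gamma> x" using per Suc by simp
    finally show ?case .
  qed simp
  have "\<gamma> t \<in> \<gamma> ` {0..L}" for t
  proof -
    define k where "k = \<lfloor>t / L\<rfloor>"
    define t' where "t' = t - k * L"
    have "k \<le> t / L" "t / L < k + 1" unfolding k_def by linarith+
    hence "k * L \<le> t" "t < (k + 1) * L" using L by (auto simp: field_simps)
    hence t'r: "t' \<in> {0..L}" unfolding t'_def by (auto simp: algebra_simps)
    have "\<gamma> t = \<gamma> t'"
    proof (cases "k \<ge> 0")
      case True
      have "t = t' + real (nat k) * L" using True unfolding t'_def by simp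
      thus ?thesis using pn by metis
    next
      case False
      have "t' = t + real (nat (-k)) * L" using False unfolding t'_def by simp
      thus ?thesis using pn by metis
    qed
    thus ?thesis using t'r by auto
  qed
  thus ?thesis by auto
qed


theorem lemmaA1:
  fixes \<gamma> :: "real \<Rightarrow> real^2" and L q :: real
  assumes "q \<ge> 1"
    and "closed_C2_curve \<gamma> L"
  shows "curve_integral_ds \<gamma> L (\<lambda>t. \<bar>curvature \<gamma> t\<bar> powr q)
           \<ge> diameter (range \<gamma>) powr (1 - q)"
proof -
  have q1: "q \<ge> 1" using assms(1) .
  from assms(2) have L: "L > 0" and per: "\<And>t. \<gamma> (t+L) = \<gamma> t"
    and regular: "\<And>t. vector_derivative \<gamma> (at t) \<noteq> 0"
    and ex: "\<exists>\<gamma>1 \<gamma>2. (\<forall>t. (\<gamma> has_vector_derivative \<gamma>1 t) (at t)) \<and>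
              (\<forall>t. (\<gamma>1 has_vector_derivative \<gamma>2 t) (at t)) \<and> continuous_on UNIV \<gamma>2"
    unfolding closed_C2_curve_def by auto
  from ex obtain g1 g2 where d1: "\<And>t. (\<gamma> has_vector_derivative g1 t) (at t)"
    and d2: "\<And>t. (g1 has_vector_derivative g2 t) (at t)" and cg2: "continuous_on UNIV g2"
    by blast
  have vd1: "\<And>t. vector_derivative \<gamma> (at t) = g1 t" using d1 vector_derivative_at by blast
  have vd2: "\<And>t. vector_derivative g1 (at t) = g2 t" using d2 vector_derivative_at by blast
  have vdfun: "(\<lambda>s. vector_derivative \<gamma> (at s)) = g1" using vd1 by auto
  have nz: "\<And>t. g1 t \<noteq> 0" using regular vd1 by metis
  have cg1: "continuous_on UNIV g1"
    using d2 has_vector_derivative_continuous continuous_at_imp_continuous_on by blast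
  have cga: "continuous_on UNIV \<gamma>"
    using d1 has_vector_derivative_continuous continuous_at_imp_continuous_on by blast
  define k where "k t = (g1 t$1 * g2 t$2 - g1 t$2 * g2 t$1) / norm (g1 t)^3" for t
  have curv: "\<And>t. curvature \<gamma> t = k t"
    unfolding curvature_def Let_def vdfun vd1 vd2 k_def by simp
  define T where "T t = (1 / norm (g1 t)) *\<^sub>R g1 t" for t
  define T' where "T' t = (1 / norm (g1 t)) *\<^sub>R g2 t - ((g1 t \<bullet> g2 t) / norm (g1 t)^3) *\<^sub>R g1 t" for t
  have dT: "\<And>t. (T has_vector_derivative T' t) (at t)"
    unfolding T_def T'_def using deriv_T[OF d2 nz] .
  have cT': "continuous_on UNIV T'" unfolding T'_def
    by (auto intro!: continuous_intros cg1 cg2 simp: nz)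
  have nT: "\<And>t. norm (T t) = 1" unfolding T_def using nz by simp
  have gT: "\<And>t. g1 t = norm (g1 t) *\<^sub>R T t" unfolding T_def using nz by simp
  have nT': "norm (T' t) = \<bar>k t\<bar> * norm (g1 t)" for t
  proof -
    have n: "norm (g1 t) > 0" using nz by simp
    have "norm (T' t) = \<bar>g1 t$1 * g2 t$2 - g1 t$2 * g2 t$1\<bar> / (norm (g1 t))^2"
      unfolding T'_def by (rule norm_T'[OF nz])
    also have "\<dots> = \<bar>k t\<bar> * norm (g1 t)" unfolding k_def using n
      by (simp add: abs_divide field_simps power_def eval_nat_numeral)
    finally show ?thesis .
  qed
  have ck: "continuous_on UNIV k" unfolding k_def
    by (auto intro!: continuous_intros cg1 cg2 simp: nz)
  define F where "F t = \<bar>k t\<bar> powr q * norm (g1 t)" for t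
  have cF: "continuous_on UNIV F" unfolding F_def
    by (intro continuous_intros continuous_on_powr' ck cg1) (use q1 in auto)
  have LHS: "curve_integral_ds \<gamma> L (\<lambda>t. \<bar>curvature \<gamma> t\<bar> powr q) = integral {0..L} F"
    unfolding curve_integral_ds_def F_def curv vd1 by simp
  have F0: "\<And>t. F t \<ge> 0" unfolding F_def by simp
  have intF: "\<And>a b. F integrable_on {a..b}"
    by (rule integrable_continuous_interval) (rule continuous_on_subset[OF cF], simp)
  have intn: "\<And>a b. (\<lambda>t. norm (g1 t)) integrable_on {a..b}"
    by (rule integrable_continuous_interval) (auto intro!: continuous_intros continuous_on_subset[OF cg1])
  have intT': "\<And>a b. (\<lambda>t. norm (T' t)) integrable_on {a..b}"
    by (rule integrable_continuous_interval) (auto intro!: continuous_intros continuous_on_subset[OF cT'])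
  define D where "D = diameter (range \<gamma>)"
  have bnd: "bounded (range \<gamma>)"
    unfolding periodic_range[of L \<gamma>, OF L per]
    by (rule compact_imp_bounded, rule compact_continuous_image)
       (auto intro: continuous_on_subset[OF cga])
  have D0: "D \<ge> 0" using diameter_bounded_bound[OF bnd, of "\<gamma> 0" "\<gamma> 0"] unfolding D_def by simp
  have I0: "integral {0..L} F \<ge> 0" by (rule integral_nonneg[OF intF]) (simp add: F0)
  show ?thesis
  proof (cases "D = 0")
    case True
    then show ?thesis using I0 LHS unfolding D_def by simp
  next
    case False
    hence Dp: "D > 0" using D0 by simp
    show ?thesis
    proof (rule ccontr)
      assume "\<not> ?thesis"
      hence Ilt: "integral {0..L} F < D powr (1-q)" using LHS unfolding D_def by simp
      define c where "c = 1 / D"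
      have cp: "c > 0" unfolding c_def using Dp by simp
      have hc: "D powr (1-q) = c powr (q-1)" unfolding c_def using Dp
        by (simp add: powr_divide powr_minus_divide[symmetric] powr_minus)
      have cqD: "c powr q * D = c powr (q-1)"
      proof -
        have "c powr q = c powr (q-1) * c" using cp by (simp add: powr_diff)
        thus ?thesis unfolding c_def using Dp by simp
      qed
      have key: "integral {a..b} (\<lambda>t. norm (T' t)) < 1"
        if ab: "0 \<le> a" "a \<le> b" "b \<le> L" and SD: "integral {a..b} (\<lambda>t. norm (g1 t)) \<le> D" for a b
      proof -
        define S where "S = integral {a..b} (\<lambda>t. norm (g1 t))"
        define K where "K = integral {a..b} (\<lambda>t. norm (T' t))"
        have pw: "q * c powr (q-1) * norm (T' t) - (q-1) * c powr q * norm (g1 t) \<le> F t" for t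
        proof -
          have "q * c powr (q-1) * \<bar>k t\<bar> - (q-1) * c powr q \<le> \<bar>k t\<bar> powr q"
            by (rule young_powr) (use cp q1 in auto)
          hence "(q * c powr (q-1) * \<bar>k t\<bar> - (q-1) * c powr q) * norm (g1 t) \<le> \<bar>k t\<bar> powr q * norm (g1 t)"
            by (rule mult_right_mono) simp
          thus ?thesis unfolding F_def nT' by (simp add: algebra_simps)
        qed
        have "q * c powr (q-1) * K - (q-1) * c powr q * S
            = integral {a..b} (\<lambda>t. q * c powr (q-1) * norm (T' t) - (q-1) * c powr q * norm (g1 t))"
          unfolding K_def S_def
          by (subst integral_diff) (auto intro!: integrable_on_mult_right intT' intn)
        also have "\<dots> \<le> integral {a..b} F"
          by (rule integral_le[OF _ intF pw]) (auto intro!: integrable_diff integrable_on_mult_right intT' intn)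
        also have "\<dots> \<le> integral {0..L} F"
          by (rule integral_subset_le) (use ab F0 intF in auto)
        also have "\<dots> < c powr (q-1)" using Ilt hc by simp
        finally have A: "q * c powr (q-1) * K < c powr (q-1) + (q-1) * c powr q * S" by simp
        have "c powr q * S \<le> c powr q * D" using SD unfolding S_def by (simp add: mult_left_mono)
        hence "(q-1) * (c powr q * S) \<le> (q-1) * c powr (q-1)" using cqD q1 by (simp add: mult_left_mono)
        with A have "q * c powr (q-1) * K < q * c powr (q-1) * 1" by (simp add: algebra_simps)
        moreover have "q * c powr (q-1) > 0" using q1 cp by simp
        ultimately show ?thesis unfolding K_def by (metis mult.right_neutral mult_less_cancel_left_pos)
      qed
      define s where "s u = integral {0..u} (\<lambda>t. norm (g1 t))" for u
      have cs: "continuous_on {0..L} s" unfolding s_def by (rule indefinite_integral_continuous_1[OF intn])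
      define l where "l = s L"
      have lpos: "l > 0"
      proof -
        have "continuous_on {0..L} (\<lambda>t. norm (g1 t))" by (auto intro!: continuous_intros continuous_on_subset[OF cg1])
        then obtain x0 where x0: "x0 \<in> {0..L}" "\<And>y. y \<in> {0..L} \<Longrightarrow> norm (g1 x0) \<le> norm (g1 y)"
          using continuous_attains_inf[of "{0..L}" "\<lambda>t. norm (g1 t)"] L by auto
        have "integral {0..L} (\<lambda>t. norm (g1 x0)) \<le> integral {0..L} (\<lambda>t. norm (g1 t))"
          by (rule integral_le[OF _ intn]) (auto intro: x0)
        moreover have "integral {0..L} (\<lambda>t. norm (g1 x0)) = L * norm (g1 x0)" using L by simp
        moreover have "L * norm (g1 x0) > 0" using L nz by simp
        ultimately show ?thesis unfolding l_def s_def by linarith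
      qed
      define h where "h = min D (l/2)"
      have hp: "h > 0" unfolding h_def using Dp lpos by simp
      have s0: "s 0 = 0" unfolding s_def by simp
      obtain m where m: "0 \<le> m" "m \<le> L" "s m = h"
      proof -
        have "h \<le> s L" using lpos unfolding h_def l_def by simp
        thus ?thesis using IVT'[of s 0 h L] cs s0 hp L that by auto
      qed
      obtain b where b: "0 \<le> b" "b \<le> L" "s b = 2*h" and bcase: "\<not> D \<le> l/2 \<Longrightarrow> b = L"
      proof (cases "D \<le> l/2")
        case True
        then obtain b where "0 \<le> b" "b \<le> L" "s b = 2*h"
          using IVT'[of s 0 "2*h" L] cs s0 hp L unfolding l_def h_def by auto
        thus ?thesis using that True by auto
      next
        case False
        thus ?thesis using that[of L] L unfolding h_def l_def by auto
      qed
      have comb: "s x + integral {x..y} (\<lambda>t. norm (g1 t)) = s y" if "0 \<le> x" "x \<le> y" for x y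
        unfolding s_def by (rule Henstock_Kurzweil_Integration.integral_combine) (use that in \<open>auto intro: intn\<close>)
      have mb: "m \<le> b"
      proof (rule ccontr)
        assume "\<not> m \<le> b"
        hence "s b + integral {b..m} (\<lambda>t. norm (g1 t)) = s m" using comb[of b m] b by linarith
        moreover have "integral {b..m} (\<lambda>t. norm (g1 t)) \<ge> 0" by (rule integral_nonneg[OF intn]) simp
        ultimately show False using m b hp by simp
      qed
      have S1: "integral {0..m} (\<lambda>t. norm (g1 t)) = h" using m unfolding s_def by simp
      have S2: "integral {m..b} (\<lambda>t. norm (g1 t)) = h" using comb[OF m(1) mb] m b by simp
      have hD: "h \<le> D" unfolding h_def by simp
      define K1 where "K1 = integral {0..m} (\<lambda>t. norm (T' t))"
      define K2 where "K2 = integral {m..b} (\<lambda>t. norm (T' t))"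
      have K1: "K1 < 1" unfolding K1_def by (rule key) (use m mb b S1 hD in auto)
      have K2: "K2 < 1" unfolding K2_def by (rule key) (use m mb b S2 hD in auto)
      have K10: "K1 \<ge> 0" unfolding K1_def by (rule integral_nonneg[OF intT']) simp
      have K20: "K2 \<ge> 0" unfolding K2_def by (rule integral_nonneg[OF intT']) simp
      have H1: "(\<gamma> m - \<gamma> 0) \<bullet> T m \<ge> (1 - K1^2/2) * h"
        using half_arc[OF m(1) d1 dT cg1 cT' nT gT, of "T m"] S1 unfolding K1_def by simp
      have H2: "(\<gamma> b - \<gamma> m) \<bullet> T m \<ge> (1 - K2^2/2) * h"
        using half_arc[OF mb d1 dT cg1 cT' nT gT, of "T m"] S2 unfolding K2_def by simp
      have "K1^2 < 1" using K1 K10 by (simp add: power_less_one_iff abs_square_less_1)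
      hence "h * K1^2 < h * 1" using hp by (intro mult_strict_left_mono) auto
      hence "(1 - K1^2/2) * h > h/2" by (simp add: algebra_simps)
      moreover have "K2^2 < 1" using K2 K20 by (simp add: abs_square_less_1)
      hence "h * K2^2 < h * 1" using hp by (intro mult_strict_left_mono) auto
      hence "(1 - K2^2/2) * h > h/2" by (simp add: algebra_simps)
      ultimately have "(\<gamma> b - \<gamma> 0) \<bullet> T m > h" using H1 H2
        by (simp add: inner_diff_left)
      moreover have "(\<gamma> b - \<gamma> 0) \<bullet> T m \<le> norm (\<gamma> b - \<gamma> 0)"
        using norm_cauchy_schwarz[of "\<gamma> b - \<gamma> 0" "T m"] nT[of m] by simp
      ultimately have big: "norm (\<gamma> b - \<gamma> 0) > h" by simp
      show False
      proof (cases "D \<le> l/2")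
        case True
        hence "h = D" unfolding h_def by simp
        moreover have "dist (\<gamma> b) (\<gamma> 0) \<le> D" unfolding D_def by (rule diameter_bounded_bound[OF bnd]) auto
        ultimately show False using big by (simp add: dist_norm)
      next
        case False
        hence "b = L" by (rule bcase)
        moreover have "\<gamma> L = \<gamma> 0" using per[of 0] by simp
        ultimately show False using big hp by simp
      qed
    qed
  qed
qed

end
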